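(* Let $\mathcal{C}$ be a class of finite reflexive digraphs for which there is a natural number $N$ such that every set of disjoint partial pairs in every member of $\mathcal{C}$ has size at most $N$. Then $\mathcal{C}$ is well quasi-ordered under the standard and under the strong homomorphic image orderings.
   Context: A digraph is a set $D$ with a binary relation $E(D)\subseteq D\times D$; it is reflexive if every loop $(x,x)$ is an edge. A pair of vertices $a,b$ is partial if $a\neq b$ and not both $(a,b)$ and $(b,a)$ are edges. Partial pairs $(a_1,b_1),\dots,(a_k,b_k)$ are disjoint if $a_1,\dots,a_k,b_1,\dots,b_k$ are all distinct. A homomorphism maps edges to edges; it is strong if additionally every edge of the target between vertices of the image is the image of an edge. Standard homomorphic image ordering: $A\preceq B$ iff there is a surjective homomorphism $B\to A$; strong: iff there is a surjective strong homomorphism $B\to A$. Well quasi-ordered means no infinite strictly decreasing sequence and no infinite antichain; digraphs considered up to isomorphism. *)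

theory Defs
  imports Main
begin

type_synonym 'a digraph = "'a set \<times> ('a \<times> 'a) set"

definition verts :: "'a digraph \<Rightarrow> 'a set" where "verts D = fst D"
definition edges :: "'a digraph \<Rightarrow> ('a \<times> 'a) set" where "edges D = snd D"

definition digraph :: "'a digraph \<Rightarrow> bool" where
  "digraph D \<longleftrightarrow> edges D \<subseteq> verts D \<times> verts D"

definition finite_digraph :: "'a digraph \<Rightarrow> bool" where
  "finite_digraph D \<longleftrightarrow> digraph D \<and> finite (verts D)"

definition reflexive_digraph :: "'a digraph \<Rightarrow> bool" where
  "reflexive_digraph D \<longleftrightarrow> digraph D \<and> (\<forall>x\<in>verts D. (x, x) \<in> edges D)"

definition partial_pair :: "'a digraph \<Rightarrow> 'a \<Rightarrow> 'a \<Rightarrow> bool" where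
  "partial_pair D a b \<longleftrightarrow> a \<in> verts D \<and> b \<in> verts D \<and> a \<noteq> b \<and>
     \<not> ((a, b) \<in> edges D \<and> (b, a) \<in> edges D)"

definition disjoint_partial_pairs :: "'a digraph \<Rightarrow> ('a \<times> 'a) set \<Rightarrow> bool" where
  "disjoint_partial_pairs D P \<longleftrightarrow>
     (\<forall>(a, b)\<in>P. partial_pair D a b) \<and>
     (\<forall>(a, b)\<in>P. \<forall>(c, d)\<in>P. (a, b) \<noteq> (c, d) \<longrightarrow> {a, b} \<inter> {c, d} = {})"

definition hom :: "'a digraph \<Rightarrow> 'a digraph \<Rightarrow> ('a \<Rightarrow> 'a) \<Rightarrow> bool" where
  "hom G H f \<longleftrightarrow> f ` verts G \<subseteq> verts H \<and>
     (\<forall>(x, y)\<in>edges G. (f x, f y) \<in> edges H)"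

definition strong_hom :: "'a digraph \<Rightarrow> 'a digraph \<Rightarrow> ('a \<Rightarrow> 'a) \<Rightarrow> bool" where
  "strong_hom G H f \<longleftrightarrow> hom G H f \<and>
     (\<forall>u v. (u, v) \<in> edges H \<and> u \<in> f ` verts G \<and> v \<in> f ` verts G \<longrightarrow>
        (\<exists>x y. (x, y) \<in> edges G \<and> f x = u \<and> f y = v))"

definition hom_image_le :: "'a digraph \<Rightarrow> 'a digraph \<Rightarrow> bool" where
  "hom_image_le A B \<longleftrightarrow> (\<exists>f. hom B A f \<and> f ` verts B = verts A)"

definition strong_hom_image_le :: "'a digraph \<Rightarrow> 'a digraph \<Rightarrow> bool" where
  "strong_hom_image_le A B \<longleftrightarrow> (\<exists>f. strong_hom B A f \<and> f ` verts B = verts A)"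

definition well_quasi_ordered_on :: "('b \<Rightarrow> 'b \<Rightarrow> bool) \<Rightarrow> 'b set \<Rightarrow> bool" where
  "well_quasi_ordered_on le C \<longleftrightarrow>
     \<not> (\<exists>s. (\<forall>i. s i \<in> C) \<and> (\<forall>i. le (s (Suc i)) (s i) \<and> \<not> le (s i) (s (Suc i)))) \<and>
     \<not> (\<exists>s. (\<forall>i. s i \<in> C) \<and> (\<forall>(i::nat) j. i \<noteq> j \<longrightarrow> \<not> le (s i) (s j)))"

end

theory Submission imports Defs "HOL-Library.Ramsey" "HOL-Library.Infinite_Set" begin

lemma strong_imp_hom_le: "strong_hom_image_le A B \<Longrightarrow> hom_image_le A B"
  unfolding strong_hom_image_le_def hom_image_le_def strong_hom_def by blast

lemma iso_lemma:
  assumes h: "hom B A f" and s: "f ` verts B = verts A" and fin: "finite (verts B)"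
    and dA: "digraph A" and dB: "digraph B"
    and cv: "card (verts A) = card (verts B)" and ce: "card (edges A) \<le> card (edges B)"
  shows "strong_hom_image_le B A"
proof -
  have inj: "inj_on f (verts B)" using cv s fin by (metis eq_card_imp_inj_on)
  define F where "F = (\<lambda>(x,y). (f x, f y))"
  have EB: "edges B \<subseteq> verts B \<times> verts B" using dB by (simp add: digraph_def)
  have EA: "edges A \<subseteq> verts A \<times> verts A" using dA by (simp add: digraph_def)
  have injF: "inj_on F (edges B)"
    using inj EB unfolding F_def inj_on_def by (auto dest: inj_onD)
  have sub: "F ` edges B \<subseteq> edges A" using h unfolding hom_def F_def by auto
  have finA: "finite (edges A)" using EA fin s by (metis finite_SigmaI finite_imageI finite_subset)
  have finB: "finite (edges B)" using EB fin by (metis finite_SigmaI finite_subset)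
  have "card (F ` edges B) = card (edges B)" using injF by (simp add: card_image)
  hence eq: "F ` edges B = edges A" using sub ce finA by (metis card_seteq)
  define g where "g = inv_into (verts B) f"
  have gf: "\<And>x. x \<in> verts B \<Longrightarrow> g (f x) = x" using inj by (simp add: g_def)
  have gim: "g ` verts A = verts B" using s inj by (metis g_def inv_into_image_cancel order_refl)
  have "hom A B g"
    unfolding hom_def
  proof (intro conjI)
    show "g ` verts A \<subseteq> verts B" using gim by simp
    show "\<forall>(x, y)\<in>edges A. (g x, g y) \<in> edges B"
    proof (clarify)
      fix u v assume "(u,v) \<in> edges A"
      hence "(u,v) \<in> F ` edges B" using eq by simp
      then obtain x y where "(x,y) \<in> edges B" "u = f x" "v = f y" unfolding F_def by auto
      thus "(g u, g v) \<in> edges B" using EB gf by auto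
    qed
  qed
  moreover have "\<forall>u v. (u, v) \<in> edges B \<and> u \<in> g ` verts A \<and> v \<in> g ` verts A \<longrightarrow>
        (\<exists>x y. (x, y) \<in> edges A \<and> g x = u \<and> g y = v)"
  proof clarify
    fix u v assume uv: "(u,v) \<in> edges B"
    hence "(f u, f v) \<in> edges A" using sub unfolding F_def by auto
    moreover have "g (f u) = u" "g (f v) = v" using uv EB gf by auto
    ultimately show "\<exists>x y. (x, y) \<in> edges A \<and> g x = u \<and> g y = v" by blast
  qed
  ultimately show ?thesis unfolding strong_hom_image_le_def strong_hom_def using gim by blast
qed


lemma surj_exists:
  assumes "finite X" "finite Y" "card Y \<le> card X" "X = {} \<longleftrightarrow> Y = {}"
  shows "\<exists>g. g ` X = Y"
proof (cases "Y = {}")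
  case True thus ?thesis using assms by auto
next
  case False
  then obtain y0 where y0: "y0 \<in> Y" by auto
  obtain h where h: "h ` Y \<subseteq> X" "inj_on h Y" using card_le_inj[OF assms(2,1,3)] by blast
  define g where "g x = (if x \<in> h ` Y then inv_into Y h x else y0)" for x
  have "g ` X = Y"
  proof
    show "g ` X \<subseteq> Y" using y0 by (auto simp: g_def inv_into_into)
    show "Y \<subseteq> g ` X"
    proof
      fix y assume "y \<in> Y"
      hence "g (h y) = y" "h y \<in> X" using h by (auto simp: g_def)
      thus "y \<in> g ` X" by force
    qed
  qed
  thus ?thesis by blast
qed

lemma decomp:
  assumes fd: "finite_digraph D" and rd: "reflexive_digraph D"
    and bd: "\<forall>P. disjoint_partial_pairs D P \<longrightarrow> card P \<le> N"
  shows "\<exists>e m K. m \<le> 2*N \<and> bij_betw e {..<m} (verts D - K) \<and> K \<subseteq> verts D \<and>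
           (\<forall>x\<in>K. \<forall>y\<in>K. (x,y) \<in> edges D)"
proof -
  have fin: "finite (verts D)" using fd by (simp add: finite_digraph_def)
  have dpp0: "disjoint_partial_pairs D {}" by (simp add: disjoint_partial_pairs_def)
  have sub: "\<And>P. disjoint_partial_pairs D P \<Longrightarrow> P \<subseteq> verts D \<times> verts D"
    unfolding disjoint_partial_pairs_def partial_pair_def by auto
  obtain n where n: "\<exists>P. disjoint_partial_pairs D P \<and> card P = n"
     and nmax: "\<forall>y. (\<exists>P. disjoint_partial_pairs D P \<and> card P = y) \<longrightarrow> y \<le> n"
  proof -
    have "\<exists>x. (\<exists>P. disjoint_partial_pairs D P \<and> card P = x) \<and> (\<forall>y. (\<exists>P. disjoint_partial_pairs D P \<and> card P = y) \<longrightarrow> y \<le> x)"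
      apply (rule Nat.ex_has_greatest_nat[where k=0 and b=N])
      using dpp0 apply force
      using bd by blast
    thus ?thesis using that by blast
  qed
  obtain P where P: "disjoint_partial_pairs D P" "card P = n" using n by blast
  have finP: "finite P" using sub[OF P(1)] fin by (meson finite_SigmaI finite_subset)
  define S where "S = fst ` P \<union> snd ` P"
  have SV: "S \<subseteq> verts D" using sub[OF P(1)] by (auto simp: S_def)
  have "card S \<le> card (fst ` P) + card (snd ` P)" unfolding S_def by (rule card_Un_le)
  also have "\<dots> \<le> card P + card P" using finP by (meson add_mono card_image_le)
  finally have cS: "card S \<le> 2*N" using P bd by auto
  have finS: "finite S" using SV fin by (rule finite_subset)
  obtain e where e: "bij_betw e {0..<card S} S" using ex_bij_betw_nat_finite[OF finS] by blast
  define K where "K = verts D - S"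
  have VK: "verts D - K = S" using SV by (auto simp: K_def)
  have compl: "\<forall>x\<in>K. \<forall>y\<in>K. (x,y) \<in> edges D"
  proof (intro ballI)
    fix x y assume x: "x \<in> K" and y: "y \<in> K"
    show "(x,y) \<in> edges D"
    proof (rule ccontr)
      assume ne: "(x,y) \<notin> edges D"
      have xy: "x \<noteq> y" using ne x rd by (auto simp: reflexive_digraph_def K_def)
      have pp: "partial_pair D x y" using x y xy ne by (auto simp: partial_pair_def K_def)
      have xS: "x \<notin> S" "y \<notin> S" using x y by (auto simp: K_def)
      have nin: "(x,y) \<notin> P" using xS by (force simp: S_def)
      have "disjoint_partial_pairs D (insert (x,y) P)"
        unfolding disjoint_partial_pairs_def
      proof (intro conjI)
        show "\<forall>(a, b)\<in>insert (x, y) P. partial_pair D a b"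
          using P(1) pp unfolding disjoint_partial_pairs_def by auto
        have A: "\<And>a b. (a,b) \<in> P \<Longrightarrow> {x,y} \<inter> {a,b} = {}"
          using xS unfolding S_def by force
        have H: "\<And>a b c d. (a,b) \<in> insert (x, y) P \<Longrightarrow> (c,d) \<in> insert (x, y) P \<Longrightarrow> (a,b) \<noteq> (c,d) \<Longrightarrow> {a, b} \<inter> {c, d} = {}"
        proof -
          fix a b c d assume ab: "(a,b) \<in> insert (x, y) P" and cd: "(c,d) \<in> insert (x, y) P"
            and ne: "(a,b) \<noteq> (c,d)"
          show "{a, b} \<inter> {c, d} = {}"
          proof (cases "(a,b) = (x,y)")
            case True thus ?thesis using cd ne A by auto
          next
            case F1: False
            show ?thesis
            proof (cases "(c,d) = (x,y)")
              case True thus ?thesis using ab ne A by auto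
            next
              case False thus ?thesis using F1 ab cd ne P(1) unfolding disjoint_partial_pairs_def by auto
            qed
          qed
        qed
        thus "\<forall>(a, b)\<in>insert (x, y) P. \<forall>(c, d)\<in>insert (x, y) P. (a, b) \<noteq> (c, d) \<longrightarrow> {a, b} \<inter> {c, d} = {}" by blast
      qed
      moreover have "card (insert (x,y) P) = n + 1" using finP nin P(2) by simp
      ultimately show False using nmax by fastforce
    qed
  qed
  show ?thesis
    apply (rule exI[of _ e], rule exI[of _ "card S"], rule exI[of _ K])
    using cS e VK compl by (auto simp: K_def atLeast0LessThan)
qed


definition tpd :: "'a digraph \<Rightarrow> (nat \<Rightarrow> 'a) \<Rightarrow> nat \<Rightarrow> 'a \<Rightarrow> nat set \<times> nat set" where
  "tpd D e m v = ({k. k < m \<and> (e k, v) \<in> edges D}, {k. k < m \<and> (v, e k) \<in> edges D})"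

lemma combine:
  fixes A B :: "'a digraph"
  assumes fA: "finite (verts A)" and fB: "finite (verts B)"
    and b1: "bij_betw e1 {..<m} (verts A - K1)" and K1: "K1 \<subseteq> verts A"
    and c1: "\<forall>x\<in>K1. \<forall>y\<in>K1. (x,y) \<in> edges A"
    and b2: "bij_betw e2 {..<m} (verts B - K2)" and K2: "K2 \<subseteq> verts B"
    and c2: "\<forall>x\<in>K2. \<forall>y\<in>K2. (x,y) \<in> edges B"
    and dB: "digraph B"
    and R: "\<forall>k<m. \<forall>l<m. (e1 k, e1 l) \<in> edges A \<longleftrightarrow> (e2 k, e2 l) \<in> edges B"
    and hc: "\<forall>t. card {v\<in>K1. tpd A e1 m v = t} \<le> card {v\<in>K2. tpd B e2 m v = t}"
    and hz: "\<forall>t. {v\<in>K1. tpd A e1 m v = t} = {} \<longleftrightarrow> {v\<in>K2. tpd B e2 m v = t} = {}"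
  shows "strong_hom_image_le A B"
proof -
  define X1 where "X1 t = {v\<in>K1. tpd A e1 m v = t}" for t
  define X2 where "X2 t = {v\<in>K2. tpd B e2 m v = t}" for t
  have "\<forall>t. \<exists>g. g ` X2 t = X1 t"
  proof
    fix t
    have "finite (X2 t)" "finite (X1 t)" using fA fB K1 K2 by (auto simp: X1_def X2_def intro: finite_subset)
    moreover have "card (X1 t) \<le> card (X2 t)" "X2 t = {} \<longleftrightarrow> X1 t = {}"
      using spec[OF hc, of t] spec[OF hz, of t] unfolding X1_def X2_def by simp_all
    ultimately show "\<exists>g. g ` X2 t = X1 t" by (rule surj_exists)
  qed
  then obtain gs where gs: "\<And>t. gs t ` X2 t = X1 t" by metis
  define f where "f x = (if x \<in> K2 then gs (tpd B e2 m x) x else e1 (inv_into {..<m} e2 x))" for x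
  have F1: "f x \<in> K1 \<and> tpd A e1 m (f x) = tpd B e2 m x" if "x \<in> K2" for x
  proof -
    have "x \<in> X2 (tpd B e2 m x)" using that by (simp add: X2_def)
    hence "gs (tpd B e2 m x) x \<in> X1 (tpd B e2 m x)" using gs[of "tpd B e2 m x"] by (metis imageI)
    moreover have "f x = gs (tpd B e2 m x) x" using that by (simp add: f_def)
    ultimately have "f x \<in> X1 (tpd B e2 m x)" by simp
    thus ?thesis by (simp add: X1_def)
  qed
  have F2: "\<exists>x\<in>K2. f x = v" if "v \<in> K1" for v
  proof -
    have "v \<in> X1 (tpd A e1 m v)" using that by (simp add: X1_def)
    hence "v \<in> gs (tpd A e1 m v) ` X2 (tpd A e1 m v)" using gs[of "tpd A e1 m v"] by simp
    then obtain x where x: "x \<in> X2 (tpd A e1 m v)" "v = gs (tpd A e1 m v) x" by blast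
    hence "x \<in> K2" "tpd B e2 m x = tpd A e1 m v" by (simp_all add: X2_def)
    hence "f x = v" using x(2) by (simp add: f_def)
    thus ?thesis using \<open>x \<in> K2\<close> by blast
  qed
  have inj2: "inj_on e2 {..<m}" using b2 by (simp add: bij_betw_def)
  have F3: "f (e2 k) = e1 k" if "k < m" for k
  proof -
    have "e2 k \<in> verts B - K2" using b2 that by (auto simp: bij_betw_def)
    thus ?thesis using that inj2 by (simp add: f_def)
  qed
  have F4: "\<exists>k<m. x = e2 k" if "x \<in> verts B" "x \<notin> K2" for x
    using b2 that by (auto simp: bij_betw_def)
  have VA: "verts A = e1 ` {..<m} \<union> K1" using b1 K1 by (auto simp: bij_betw_def)
  have VB: "verts B = e2 ` {..<m} \<union> K2" using b2 K2 by (auto simp: bij_betw_def)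
  have im: "f ` verts B = verts A"
  proof
    show "f ` verts B \<subseteq> verts A" using F1 F3 VA VB by auto
    show "verts A \<subseteq> f ` verts B"
    proof
      fix v assume "v \<in> verts A"
      hence "v \<in> e1 ` {..<m} \<or> v \<in> K1" using VA by auto
      thus "v \<in> f ` verts B"
      proof
        assume "v \<in> e1 ` {..<m}"
        then obtain k where "k < m" "v = e1 k" by auto
        thus ?thesis using F3 VB by (metis UnI1 image_eqI lessThan_iff)
      next
        assume "v \<in> K1" thus ?thesis using F2 K2 by blast
      qed
    qed
  qed
  have EB: "edges B \<subseteq> verts B \<times> verts B" using dB by (simp add: digraph_def)
  have hom: "hom B A f"
    unfolding hom_def
  proof (intro conjI)
    show "f ` verts B \<subseteq> verts A" using im by simp
    have "(f x, f y) \<in> edges A" if xy: "(x,y) \<in> edges B" for x y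
    proof -
      have xB: "x \<in> verts B" "y \<in> verts B" using xy EB by auto
      show ?thesis
      proof (cases "x \<in> K2")
        case xK: True
        show ?thesis
        proof (cases "y \<in> K2")
          case True thus ?thesis using xK F1 c1 by blast
        next
          case False
          then obtain l where l: "l < m" "y = e2 l" using F4 xB by blast
          have "l \<in> snd (tpd B e2 m x)" using xy l by (simp add: tpd_def)
          hence "l \<in> snd (tpd A e1 m (f x))" using F1 xK by simp
          thus ?thesis using l F3 by (simp add: tpd_def)
        qed
      next
        case xK: False
        then obtain k where k: "k < m" "x = e2 k" using F4 xB by blast
        show ?thesis
        proof (cases "y \<in> K2")
          case True
          have "k \<in> fst (tpd B e2 m y)" using xy k by (simp add: tpd_def)
          hence "k \<in> fst (tpd A e1 m (f y))" using F1 True by simp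
          thus ?thesis using k F3 by (simp add: tpd_def)
        next
          case False
          then obtain l where l: "l < m" "y = e2 l" using F4 xB by blast
          show ?thesis using k l F3 R xy by simp
        qed
      qed
    qed
    thus "\<forall>(x, y)\<in>edges B. (f x, f y) \<in> edges A" by blast
  qed
  have strong: "\<exists>x y. (x, y) \<in> edges B \<and> f x = u \<and> f y = v"
    if uv: "(u,v) \<in> edges A" "u \<in> verts A" "v \<in> verts A" for u v
  proof (cases "u \<in> K1")
    case uK: True
    then obtain x where x: "x \<in> K2" "f x = u" using F2 by blast
    show ?thesis
    proof (cases "v \<in> K1")
      case True
      then obtain y where "y \<in> K2" "f y = v" using F2 by blast
      thus ?thesis using x c2 by blast
    next
      case False
      then obtain l where l: "l < m" "v = e1 l" using VA uv by auto
      have "l \<in> snd (tpd A e1 m u)" using uv l by (simp add: tpd_def)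
      moreover have "tpd A e1 m u = tpd B e2 m x" using F1 x by blast
      ultimately have "l \<in> snd (tpd B e2 m x)" by simp
      hence "(x, e2 l) \<in> edges B" using l by (simp add: tpd_def)
      thus ?thesis using x F3 l by blast
    qed
  next
    case uK: False
    then obtain k where k: "k < m" "u = e1 k" using VA uv by auto
    show ?thesis
    proof (cases "v \<in> K1")
      case True
      then obtain y where y: "y \<in> K2" "f y = v" using F2 by blast
      have "k \<in> fst (tpd A e1 m v)" using uv k by (simp add: tpd_def)
      moreover have "tpd A e1 m v = tpd B e2 m y" using F1 y by blast
      ultimately have "k \<in> fst (tpd B e2 m y)" by simp
      hence "(e2 k, y) \<in> edges B" using k by (simp add: tpd_def)
      thus ?thesis using y F3 k by blast
    next
      case False
      then obtain l where l: "l < m" "v = e1 l" using VA uv by auto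
      have "(e2 k, e2 l) \<in> edges B" using R k l uv by simp
      thus ?thesis using F3 k l by blast
    qed
  qed
  show ?thesis unfolding strong_hom_image_le_def strong_hom_def
    using hom im strong by blast
qed


lemma no_desc:
  assumes H1: "\<And>A B. le A B \<Longrightarrow> hom_image_le A B"
    and H2: "\<And>A B. strong_hom_image_le A B \<Longrightarrow> le A B"
    and C: "\<forall>D\<in>C. finite_digraph D \<and> reflexive_digraph D"
  shows "\<not> (\<exists>s. (\<forall>i. s i \<in> C) \<and> (\<forall>i. le (s (Suc i)) (s i) \<and> \<not> le (s i) (s (Suc i))))"
proof
  assume "\<exists>s. (\<forall>i. s i \<in> C) \<and> (\<forall>i. le (s (Suc i)) (s i) \<and> \<not> le (s i) (s (Suc i)))"
  then obtain s where sC: "\<forall>i. s i \<in> C" and sd: "\<forall>i. le (s (Suc i)) (s i) \<and> \<not> le (s i) (s (Suc i))"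
    by blast
  define \<mu> where "\<mu> i = (card (verts (s i)), card (verts (s i)) * card (verts (s i)) - card (edges (s i)))" for i
  have "\<forall>i. (\<mu> (Suc i), \<mu> i) \<in> less_than <*lex*> less_than"
  proof
    fix i
    define A where "A = s (Suc i)"
    define B where "B = s i"
    have le1: "le A B" and nle: "\<not> le B A" using sd by (auto simp: A_def B_def)
    obtain f where h: "hom B A f" and im: "f ` verts B = verts A"
      using H1[OF le1] by (auto simp: hom_image_le_def)
    have fB: "finite (verts B)" and dB: "digraph B" and dA: "digraph A"
      using C sC by (auto simp: A_def B_def finite_digraph_def)
    have fA: "finite (verts A)" using fB im by (metis finite_imageI)
    have cv: "card (verts A) \<le> card (verts B)" using im fB by (metis card_image_le)
    show "(\<mu> (Suc i), \<mu> i) \<in> less_than <*lex*> less_than"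
    proof (cases "card (verts A) < card (verts B)")
      case True thus ?thesis by (simp add: \<mu>_def A_def B_def)
    next
      case False
      hence eq: "card (verts A) = card (verts B)" using cv by simp
      have ce: "card (edges B) < card (edges A)"
      proof (rule ccontr)
        assume "\<not> card (edges B) < card (edges A)"
        hence "card (edges A) \<le> card (edges B)" by simp
        hence "strong_hom_image_le B A" using iso_lemma[OF h im fB dA dB eq] by simp
        thus False using H2 nle by blast
      qed
      have "edges A \<subseteq> verts A \<times> verts A" using dA by (simp add: digraph_def)
      hence "card (edges A) \<le> card (verts A \<times> verts A)" using fA by (intro card_mono) auto
      hence "card (edges A) \<le> card (verts A) * card (verts A)" by (simp add: card_cartesian_product)
      hence "card (verts A) * card (verts A) - card (edges A) < card (verts B) * card (verts B) - card (edges B)"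
        using ce unfolding eq[symmetric] by linarith
      thus ?thesis using eq by (simp add: \<mu>_def A_def B_def)
    qed
  qed
  moreover have "wf (less_than <*lex*> less_than)" by (intro wf_lex_prod wf_less_than)
  ultimately show False using wf_iff_no_infinite_down_chain by blast
qed


lemma find_pair:
  fixes s :: "nat \<Rightarrow> 'a digraph"
  assumes C: "\<forall>D\<in>C. finite_digraph D \<and> reflexive_digraph D"
    and bd: "\<forall>D\<in>C. \<forall>P. disjoint_partial_pairs D P \<longrightarrow> card P \<le> N"
    and sC: "\<forall>i. s i \<in> C"
  shows "\<exists>i j. i < j \<and> strong_hom_image_le (s i) (s j)"
proof -
  have ex: "\<forall>i. \<exists>e m K. m \<le> 2*N \<and> bij_betw e {..<m} (verts (s i) - K) \<and> K \<subseteq> verts (s i) \<and>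
           (\<forall>x\<in>K. \<forall>y\<in>K. (x,y) \<in> edges (s i))"
    using decomp C bd sC by blast
  obtain e m K where Q: "\<And>i. m i \<le> 2*N \<and> bij_betw (e i) {..<m i} (verts (s i) - K i) \<and> K i \<subseteq> verts (s i) \<and>
           (\<forall>x\<in>K i. \<forall>y\<in>K i. (x,y) \<in> edges (s i))"
    using ex by metis
  define T0 where "T0 = Pow {..<2*N} \<times> Pow {..<2*N}"
  have finT0: "finite T0" by (simp add: T0_def)
  have tpT0: "tpd (s i) (e i) (m i) v \<in> T0" for i v
  proof -
    have "m i \<le> 2*N" using Q by blast
    thus ?thesis by (auto simp: tpd_def T0_def)
  qed
  define cnt where "cnt i t = card {v\<in>K i. tpd (s i) (e i) (m i) v = t}" for i t
  define R where "R i = {(k,l). k < m i \<and> l < m i \<and> (e i k, e i l) \<in> edges (s i)}" for i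
  define key where "key i = (m i, R i, {t\<in>T0. cnt i t > 0})" for i
  define KS where "KS = {..2*N} \<times> Pow ({..<2*N} \<times> {..<2*N}) \<times> Pow T0"
  have keyKS: "key i \<in> KS" for i
    using Q[of i] by (auto simp: key_def KS_def R_def)
  have finKS: "finite KS" using finT0 by (simp add: KS_def)
  define col where "col i j = (key i = key j, {t\<in>T0. cnt i t \<le> cnt j t})" for i j
  define CS where "CS = (UNIV :: bool set) \<times> Pow T0"
  have finCS: "finite CS" using finT0 by (simp add: CS_def)
  have colCS: "col i j \<in> CS" for i j by (auto simp: col_def CS_def)
  obtain h where h: "bij_betw h CS {0..<card CS}" using ex_bij_betw_finite_nat[OF finCS] by blast
  define fc where "fc X = h (col (Min X) (Max X))" for X
  have part: "\<forall>x\<in>(UNIV::nat set). \<forall>y\<in>UNIV. x \<noteq> y \<longrightarrow> fc {x, y} < card CS"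
    using h colCS by (auto simp: fc_def bij_betw_def)
  obtain Y t0 where Y: "infinite Y" and hom: "\<forall>x\<in>Y. \<forall>y\<in>Y. x \<noteq> y \<longrightarrow> fc {x, y} = t0"
    using Ramsey2[OF infinite_UNIV_nat part] by blast
  have colY: "col x y = col x' y'" if "x \<in> Y" "y \<in> Y" "x < y" "x' \<in> Y" "y' \<in> Y" "x' < y'" for x y x' y'
  proof -
    have "fc {x,y} = t0" "fc {x',y'} = t0" using hom that by auto
    moreover have "Min {x,y} = x" "Max {x,y} = y" "Min {x',y'} = x'" "Max {x',y'} = y'"
      using that by auto
    ultimately have "h (col x y) = h (col x' y')" by (simp add: fc_def)
    thus ?thesis using h colCS by (auto simp: bij_betw_def inj_on_def)
  qed
  obtain y0 where y0: "y0 \<in> Y" using Y by (metis finite.emptyI ex_in_conv)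
  obtain y1 where y1: "y1 \<in> Y" "y0 < y1" using Y by (metis infinite_nat_iff_unbounded)
  obtain b X where bX: "col y0 y1 = (b, X)" by (cases "col y0 y1") auto
  have colY': "col x y = (b, X)" if "x \<in> Y" "y \<in> Y" "x < y" for x y
    using colY[OF that y0 y1(1) y1(2)] bX by simp
  have b: b
  proof (rule ccontr)
    assume nb: "\<not> b"
    have "inj_on key Y"
    proof (rule inj_onI)
      fix x y assume xy: "x \<in> Y" "y \<in> Y" "key x = key y"
      show "x = y"
      proof (rule ccontr)
        assume "x \<noteq> y"
        hence "x < y \<or> y < x" by arith
        thus False
        proof
          assume "x < y" thus False using colY'[of x y] xy nb by (auto simp: col_def)
        next
          assume "y < x" thus False using colY'[of y x] xy nb by (auto simp: col_def)
        qed
      qed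
    qed
    moreover have "key ` Y \<subseteq> KS" using keyKS by auto
    ultimately have "finite Y" using finKS by (meson finite_imageD finite_subset)
    thus False using Y by simp
  qed
  have XT: "X = T0"
  proof (rule ccontr)
    assume "X \<noteq> T0"
    moreover have "X \<subseteq> T0" using bX by (auto simp: col_def)
    ultimately obtain t where t: "t \<in> T0" "t \<notin> X" by auto
    have dec: "cnt y t < cnt x t" if "x \<in> Y" "y \<in> Y" "x < y" for x y
      using colY'[OF that] t by (auto simp: col_def)
    obtain z where z: "z \<in> Y" "\<forall>y. y \<in> Y \<longrightarrow> cnt z t \<le> cnt y t"
      using ex_has_least_nat[of "\<lambda>y. y \<in> Y" y0 "\<lambda>y. cnt y t"] y0 by blast
    obtain z' where z': "z' \<in> Y" "z < z'" using Y by (metis infinite_nat_iff_unbounded)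
    show False using dec[OF z(1) z'(1) z'(2)] z(2) z'(1) by fastforce
  qed
  have kq: "key y0 = key y1" and cq: "\<forall>t\<in>T0. cnt y0 t \<le> cnt y1 t"
    using colY'[OF y0 y1] b XT by (auto simp: col_def)
  have mq: "m y0 = m y1" and Rq: "R y0 = R y1" and Zq: "{t\<in>T0. cnt y0 t > 0} = {t\<in>T0. cnt y1 t > 0}"
    using kq by (auto simp: key_def)
  have fin: "finite (verts (s i))" for i using C sC by (auto simp: finite_digraph_def)
  have finK: "finite {v\<in>K i. tpd (s i) (e i) (m i) v = t}" for i t
  proof -
    have "K i \<subseteq> verts (s i)" using Q[of i] by blast
    hence "finite (K i)" using fin[of i] by (rule finite_subset)
    thus ?thesis by (rule finite_subset[rotated]) auto
  qed
  have empty_out: "{v\<in>K i. tpd (s i) (e i) (m i) v = t} = {}" if "t \<notin> T0" for i t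
    using tpT0 that by auto
  have "strong_hom_image_le (s y0) (s y1)"
  proof (rule combine[of "s y0" "s y1" "e y0" "m y0" "K y0" "e y1" "K y1"])
    show "finite (verts (s y0))" "finite (verts (s y1))" by (rule fin)+
    show "bij_betw (e y0) {..<m y0} (verts (s y0) - K y0)" "K y0 \<subseteq> verts (s y0)"
      "\<forall>x\<in>K y0. \<forall>y\<in>K y0. (x, y) \<in> edges (s y0)" using Q[of y0] by blast+
    show "bij_betw (e y1) {..<m y0} (verts (s y1) - K y1)" "K y1 \<subseteq> verts (s y1)"
      "\<forall>x\<in>K y1. \<forall>y\<in>K y1. (x, y) \<in> edges (s y1)" using Q[of y1] unfolding mq by blast+
    show "digraph (s y1)" using C sC by (auto simp: finite_digraph_def)
    show "\<forall>k<m y0. \<forall>l<m y0. ((e y0 k, e y0 l) \<in> edges (s y0)) = ((e y1 k, e y1 l) \<in> edges (s y1))"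
    proof (intro allI impI)
      fix k l assume "k < m y0" "l < m y0"
      thus "((e y0 k, e y0 l) \<in> edges (s y0)) = ((e y1 k, e y1 l) \<in> edges (s y1))"
      proof -
        have "(k,l) \<in> R y0 \<longleftrightarrow> (e y0 k, e y0 l) \<in> edges (s y0)"
          "(k,l) \<in> R y1 \<longleftrightarrow> (e y1 k, e y1 l) \<in> edges (s y1)"
          using \<open>k < m y0\<close> \<open>l < m y0\<close> mq by (simp_all add: R_def)
        thus ?thesis using Rq by simp
      qed
    qed
    show "\<forall>t. card {v \<in> K y0. tpd (s y0) (e y0) (m y0) v = t} \<le> card {v \<in> K y1. tpd (s y1) (e y1) (m y0) v = t}"
    proof
      fix t show "card {v \<in> K y0. tpd (s y0) (e y0) (m y0) v = t} \<le> card {v \<in> K y1. tpd (s y1) (e y1) (m y0) v = t}"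
      proof (cases "t \<in> T0")
        case True thus ?thesis using cq mq by (simp add: cnt_def)
      next
        case False show ?thesis by (subst empty_out[OF False, of y0]) simp
      qed
    qed
    show "\<forall>t. ({v \<in> K y0. tpd (s y0) (e y0) (m y0) v = t} = {}) = ({v \<in> K y1. tpd (s y1) (e y1) (m y0) v = t} = {})"
    proof
      fix t show "({v \<in> K y0. tpd (s y0) (e y0) (m y0) v = t} = {}) = ({v \<in> K y1. tpd (s y1) (e y1) (m y0) v = t} = {})"
      proof (cases "t \<in> T0")
        case True
        have "(cnt y0 t > 0) = (cnt y1 t > 0)" using Zq True by blast
        thus ?thesis using finK[of y0 t] finK[of y1 t] mq by (simp add: cnt_def card_gt_0_iff) blast
      next
        case False thus ?thesis using empty_out[OF False, of y0] empty_out[OF False, of y1] mq by simp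
      qed
    qed
  qed
  thus ?thesis using y1 by blast
qed


lemma wqo_gen:
  assumes H1: "\<And>A B. le A B \<Longrightarrow> hom_image_le A B"
    and H2: "\<And>A B. strong_hom_image_le A B \<Longrightarrow> le A B"
    and C: "\<forall>D\<in>C. finite_digraph D \<and> reflexive_digraph D"
    and bd: "\<forall>D\<in>C. \<forall>P. disjoint_partial_pairs D P \<longrightarrow> card P \<le> N"
  shows "well_quasi_ordered_on le C"
  unfolding well_quasi_ordered_on_def
proof (intro conjI)
  show "\<not> (\<exists>s. (\<forall>i. s i \<in> C) \<and> (\<forall>i. le (s (Suc i)) (s i) \<and> \<not> le (s i) (s (Suc i))))"
    using no_desc[where le=le and C=C, OF H1 H2 C] by blast
  show "\<not> (\<exists>s. (\<forall>i. s i \<in> C) \<and> (\<forall>(i::nat) j. i \<noteq> j \<longrightarrow> \<not> le (s i) (s j)))"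
  proof
    assume "\<exists>s. (\<forall>i. s i \<in> C) \<and> (\<forall>(i::nat) j. i \<noteq> j \<longrightarrow> \<not> le (s i) (s j))"
    then obtain s where sC: "\<forall>i. s i \<in> C" and ac: "\<forall>(i::nat) j. i \<noteq> j \<longrightarrow> \<not> le (s i) (s j)" by blast
    obtain i j where ij: "i < j" "strong_hom_image_le (s i) (s j)" using find_pair[OF C bd sC] by blast
    have "le (s i) (s j)" by (rule H2[OF ij(2)])
    thus False using ac ij(1) by simp
  qed
qed

theorem lemma4p5:
  fixes C :: "'a digraph set" and N :: nat
  assumes "\<forall>D\<in>C. finite_digraph D \<and> reflexive_digraph D"
    and "\<forall>D\<in>C. \<forall>P. disjoint_partial_pairs D P \<longrightarrow> card P \<le> N"
  shows "well_quasi_ordered_on hom_image_le C \<and> well_quasi_ordered_on strong_hom_image_le C"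
proof
  show "well_quasi_ordered_on hom_image_le C"
    by (rule wqo_gen[OF _ strong_imp_hom_le assms]) simp
  show "well_quasi_ordered_on strong_hom_image_le C"
    by (rule wqo_gen[OF strong_imp_hom_le _ assms]) simp
qed

end
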